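(* Let $B$ be a finite skew left brace and let $S$ be a maximal subbrace of $B$. Then either $\zeta(B)\subseteq S$ or $\partial(B)\subseteq S$. In particular, $\zeta(B)\cap\partial(B)\subseteq\Phi(B)$.
   Context: A skew left brace (brace) is a set $B$ with two group structures $(B,+)$ and $(B,\cdot)$ with $a(b+c)=ab-a+ac$; $\lambda_a(b)=-a+ab$. A subbrace is a subset that is a subgroup of both groups; a maximal subbrace is a proper subbrace not contained in any other proper subbrace. An ideal is a subset that is a normal subgroup of both groups and $\lambda_b$-invariant for all $b$. The centre is $\zeta(B)=\{a\in B: a+b=b+a=ab=ba\ \forall b\in B\}$. The derived ideal $\partial(B)=[B,B]$ is the smallest ideal of $B$ containing $[B,B]_+$, $[B,B]_\cdot$ and all $ab-(a+b)$. The Frattini subbrace $\Phi(B)$ is the intersection of all maximal subbraces of $B$ (or $B$ if none exist). *)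

theory Defs
  imports "HOL-Algebra.Algebra"
begin

text \<open>A skew left brace is given by two groups G (the additive group, written
with the HOL-Algebra operation of G) and M (the multiplicative group) on the
same carrier, satisfying a(b+c) = ab - a + ac.\<close>

definition skew_brace :: "('a, 'b) monoid_scheme \<Rightarrow> ('a, 'c) monoid_scheme \<Rightarrow> bool" where
  "skew_brace G M \<longleftrightarrow> group G \<and> group M \<and> carrier G = carrier M \<and>
     (\<forall>a\<in>carrier G. \<forall>b\<in>carrier G. \<forall>c\<in>carrier G.
        a \<otimes>\<^bsub>M\<^esub> (b \<otimes>\<^bsub>G\<^esub> c)
          = (a \<otimes>\<^bsub>M\<^esub> b) \<otimes>\<^bsub>G\<^esub> inv\<^bsub>G\<^esub> a \<otimes>\<^bsub>G\<^esub> (a \<otimes>\<^bsub>M\<^esub> c))"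

definition brace_lambda :: "('a, 'b) monoid_scheme \<Rightarrow> ('a, 'c) monoid_scheme \<Rightarrow> 'a \<Rightarrow> 'a \<Rightarrow> 'a" where
  "brace_lambda G M a b = inv\<^bsub>G\<^esub> a \<otimes>\<^bsub>G\<^esub> (a \<otimes>\<^bsub>M\<^esub> b)"

definition subbrace :: "('a, 'b) monoid_scheme \<Rightarrow> ('a, 'c) monoid_scheme \<Rightarrow> 'a set \<Rightarrow> bool" where
  "subbrace G M S \<longleftrightarrow> subgroup S G \<and> subgroup S M"

definition maximal_subbrace :: "('a, 'b) monoid_scheme \<Rightarrow> ('a, 'c) monoid_scheme \<Rightarrow> 'a set \<Rightarrow> bool" where
  "maximal_subbrace G M S \<longleftrightarrow> subbrace G M S \<and> S \<noteq> carrier G \<and>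
     (\<forall>T. subbrace G M T \<and> T \<noteq> carrier G \<and> S \<subseteq> T \<longrightarrow> T = S)"

definition brace_ideal :: "('a, 'b) monoid_scheme \<Rightarrow> ('a, 'c) monoid_scheme \<Rightarrow> 'a set \<Rightarrow> bool" where
  "brace_ideal G M I \<longleftrightarrow> I \<lhd> G \<and> I \<lhd> M \<and>
     (\<forall>b\<in>carrier G. brace_lambda G M b ` I \<subseteq> I)"

definition brace_centre :: "('a, 'b) monoid_scheme \<Rightarrow> ('a, 'c) monoid_scheme \<Rightarrow> 'a set" where
  "brace_centre G M = {a \<in> carrier G. \<forall>b\<in>carrier G.
      a \<otimes>\<^bsub>G\<^esub> b = b \<otimes>\<^bsub>G\<^esub> a \<and> b \<otimes>\<^bsub>G\<^esub> a = a \<otimes>\<^bsub>M\<^esub> b \<and>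
      a \<otimes>\<^bsub>M\<^esub> b = b \<otimes>\<^bsub>M\<^esub> a}"

definition derived_gens :: "('a, 'b) monoid_scheme \<Rightarrow> ('a, 'c) monoid_scheme \<Rightarrow> 'a set" where
  "derived_gens G M =
     {inv\<^bsub>G\<^esub> a \<otimes>\<^bsub>G\<^esub> inv\<^bsub>G\<^esub> b \<otimes>\<^bsub>G\<^esub> a \<otimes>\<^bsub>G\<^esub> b | a b. a \<in> carrier G \<and> b \<in> carrier G}
   \<union> {inv\<^bsub>M\<^esub> a \<otimes>\<^bsub>M\<^esub> inv\<^bsub>M\<^esub> b \<otimes>\<^bsub>M\<^esub> a \<otimes>\<^bsub>M\<^esub> b | a b. a \<in> carrier G \<and> b \<in> carrier G}
   \<union> {(a \<otimes>\<^bsub>M\<^esub> b) \<otimes>\<^bsub>G\<^esub> inv\<^bsub>G\<^esub> (a \<otimes>\<^bsub>G\<^esub> b) | a b. a \<in> carrier G \<and> b \<in> carrier G}"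

definition derived_ideal :: "('a, 'b) monoid_scheme \<Rightarrow> ('a, 'c) monoid_scheme \<Rightarrow> 'a set" where
  "derived_ideal G M = \<Inter>{I. brace_ideal G M I \<and> derived_gens G M \<subseteq> I}"

definition frattini :: "('a, 'b) monoid_scheme \<Rightarrow> ('a, 'c) monoid_scheme \<Rightarrow> 'a set" where
  "frattini G M = (if \<exists>S. maximal_subbrace G M S
      then \<Inter>{S. maximal_subbrace G M S} else carrier G)"

end

theory Submission
  imports Defs
begin

context group begin
definition cent where "cent z \<longleftrightarrow> z \<in> carrier G \<and> (\<forall>x\<in>carrier G. z \<otimes> x = x \<otimes> z)"
lemma canc1[simp]: "x \<in> carrier G \<Longrightarrow> y \<in> carrier G \<Longrightarrow> x \<otimes> (inv x \<otimes> y) = y"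
  by (simp flip: m_assoc)
lemma canc2[simp]: "x \<in> carrier G \<Longrightarrow> y \<in> carrier G \<Longrightarrow> inv x \<otimes> (x \<otimes> y) = y"
  by (simp flip: m_assoc)
lemma centD: "cent z \<Longrightarrow> x \<in> carrier G \<Longrightarrow> z \<otimes> x = x \<otimes> z"
  unfolding cent_def by blast
lemma centC: "cent z \<Longrightarrow> z \<in> carrier G"
  unfolding cent_def by blast
lemma cent_inv: "cent z \<Longrightarrow> cent (inv z)"
  unfolding cent_def
proof (intro conjI ballI)
  fix x assume z: "z \<in> carrier G \<and> (\<forall>x\<in>carrier G. z \<otimes> x = x \<otimes> z)" and x: "x \<in> carrier G"
  have zc: "z \<in> carrier G" using z by simp
  have "inv z \<otimes> x = inv z \<otimes> (x \<otimes> z) \<otimes> inv z" using zc x by (simp add: m_assoc)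
  also have "\<dots> = inv z \<otimes> (z \<otimes> x) \<otimes> inv z" using z x by simp
  also have "\<dots> = x \<otimes> inv z" using zc x by (simp add: m_assoc)
  finally show "inv z \<otimes> x = x \<otimes> inv z" .
qed (auto)
lemma cent_mult: "cent z \<Longrightarrow> cent z' \<Longrightarrow> cent (z \<otimes> z')"
proof -
  assume a: "cent z" "cent z'"
  have c: "z \<in> carrier G" "z' \<in> carrier G" using centC[OF a(1)] centC[OF a(2)] by auto
  have "\<forall>x\<in>carrier G. z \<otimes> z' \<otimes> x = x \<otimes> (z \<otimes> z')"
  proof
    fix x assume x: "x \<in> carrier G"
    have "z \<otimes> z' \<otimes> x = z \<otimes> (z' \<otimes> x)" using c x by (simp add: m_assoc)
    also have "\<dots> = z \<otimes> (x \<otimes> z')" using centD[OF a(2) x] by simp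
    also have "\<dots> = (z \<otimes> x) \<otimes> z'" using c x by (simp add: m_assoc)
    also have "\<dots> = (x \<otimes> z) \<otimes> z'" using centD[OF a(1) x] by simp
    also have "\<dots> = x \<otimes> (z \<otimes> z')" using c x by (simp add: m_assoc)
    finally show "z \<otimes> z' \<otimes> x = x \<otimes> (z \<otimes> z')" .
  qed
  then show "cent (z \<otimes> z')" unfolding cent_def using c by simp
qed

lemma L1: assumes "s \<in> carrier G" "s' \<in> carrier G" "cent z" "cent z'"
  shows "s \<otimes> z \<otimes> (s' \<otimes> z') = s \<otimes> s' \<otimes> (z \<otimes> z')"
proof -
  have z: "z \<in> carrier G" "z' \<in> carrier G" "z \<otimes> s' = s' \<otimes> z" using centC[OF assms(3)] centC[OF assms(4)] centD[OF assms(3) assms(2)] by auto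
  have "s \<otimes> z \<otimes> (s' \<otimes> z') = s \<otimes> (z \<otimes> s') \<otimes> z'" using assms z by (metis m_assoc m_closed)
  also have "\<dots> = s \<otimes> (s' \<otimes> z) \<otimes> z'" using assms z by simp
  also have "\<dots> = s \<otimes> s' \<otimes> (z \<otimes> z')" using assms z by (simp add: m_assoc)
  finally show ?thesis .
qed

lemma L2: assumes "u \<in> carrier G" "v \<in> carrier G" "cent w"
  shows "inv (u \<otimes> w) \<otimes> (v \<otimes> w) = inv u \<otimes> v"
proof -
  have w: "w \<in> carrier G" "inv u \<otimes> v \<otimes> w = w \<otimes> (inv u \<otimes> v)" using centC[OF assms(3)] centD[OF assms(3), of "inv u \<otimes> v"] assms(1,2) by auto
  have "inv (u \<otimes> w) \<otimes> (v \<otimes> w) = inv w \<otimes> (inv u \<otimes> v \<otimes> w)" using assms w by (simp add: m_assoc inv_mult_group)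
  also have "\<dots> = inv u \<otimes> v" using assms w by (simp add: m_assoc[symmetric])
  finally show ?thesis .
qed

lemma L3: assumes "u \<in> carrier G" "v \<in> carrier G" "w \<in> carrier G"
  shows "u \<otimes> w \<otimes> inv (v \<otimes> w) = u \<otimes> inv v"
proof -
  have "u \<otimes> w \<otimes> inv (v \<otimes> w) = u \<otimes> (w \<otimes> inv w) \<otimes> inv v" using assms by (simp add: m_assoc inv_mult_group)
  then show ?thesis using assms by simp
qed

lemma L4: assumes "s \<in> carrier G" "h \<in> carrier G" "cent z"
  shows "s \<otimes> z \<otimes> h \<otimes> inv (s \<otimes> z) = s \<otimes> h \<otimes> inv s"
proof -
  have z: "z \<in> carrier G" "z \<otimes> h = h \<otimes> z" using centC[OF assms(3)] centD[OF assms(3) assms(2)] by auto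
  have "s \<otimes> z \<otimes> h \<otimes> inv (s \<otimes> z) = s \<otimes> (z \<otimes> h) \<otimes> inv z \<otimes> inv s" using assms z by (simp add: m_assoc inv_mult_group)
  also have "\<dots> = s \<otimes> h \<otimes> (z \<otimes> inv z) \<otimes> inv s" using assms z by (simp add: m_assoc)
  also have "\<dots> = s \<otimes> h \<otimes> inv s" using assms z by simp
  finally show ?thesis .
qed

lemma L5: assumes "s \<in> carrier G" "s' \<in> carrier G" "cent z" "cent z'"
  shows "inv (s \<otimes> z) \<otimes> inv (s' \<otimes> z') \<otimes> (s \<otimes> z) \<otimes> (s' \<otimes> z') = inv s \<otimes> inv s' \<otimes> s \<otimes> s'"
proof -
  have z: "z \<in> carrier G" "z' \<in> carrier G" "cent (z \<otimes> z')" "z' \<otimes> z = z \<otimes> z'"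
    using centC[OF assms(3)] centC[OF assms(4)] cent_mult[OF assms(3,4)] centD[OF assms(3), of z'] by auto
  have "inv (s \<otimes> z) \<otimes> inv (s' \<otimes> z') \<otimes> (s \<otimes> z) \<otimes> (s' \<otimes> z') = inv ((s' \<otimes> z') \<otimes> (s \<otimes> z)) \<otimes> ((s \<otimes> z) \<otimes> (s' \<otimes> z'))"
    using assms z by (simp add: m_assoc inv_mult_group)
  also have "\<dots> = inv (s' \<otimes> s \<otimes> (z \<otimes> z')) \<otimes> (s \<otimes> s' \<otimes> (z \<otimes> z'))"
    using assms z by (simp add: L1)
  also have "\<dots> = inv (s' \<otimes> s) \<otimes> (s \<otimes> s')" using assms z by (simp add: L2)
  also have "\<dots> = inv s \<otimes> inv s' \<otimes> s \<otimes> s'" using assms z by (simp add: m_assoc inv_mult_group)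
  finally show ?thesis .
qed
end

locale sb = G: group G + M: group M for G :: "('a,'b) monoid_scheme" and M :: "('a,'c) monoid_scheme" +
  assumes car: "carrier M = carrier G"
  and dist: "\<And>a b c. a \<in> carrier G \<Longrightarrow> b \<in> carrier G \<Longrightarrow> c \<in> carrier G \<Longrightarrow>
     a \<otimes>\<^bsub>M\<^esub> (b \<otimes>\<^bsub>G\<^esub> c)
          = (a \<otimes>\<^bsub>M\<^esub> b) \<otimes>\<^bsub>G\<^esub> inv\<^bsub>G\<^esub> a \<otimes>\<^bsub>G\<^esub> (a \<otimes>\<^bsub>M\<^esub> c)"
begin

lemma one_eq: "\<one>\<^bsub>M\<^esub> = \<one>\<^bsub>G\<^esub>"
proof -
  have c: "\<one>\<^bsub>M\<^esub> \<in> carrier G" "\<one>\<^bsub>G\<^esub> \<in> carrier M" using car by (metis M.one_closed, metis G.one_closed)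
  have "\<one>\<^bsub>M\<^esub> \<otimes>\<^bsub>M\<^esub> (\<one>\<^bsub>G\<^esub> \<otimes>\<^bsub>G\<^esub> \<one>\<^bsub>G\<^esub>)
     = (\<one>\<^bsub>M\<^esub> \<otimes>\<^bsub>M\<^esub> \<one>\<^bsub>G\<^esub>) \<otimes>\<^bsub>G\<^esub> inv\<^bsub>G\<^esub> \<one>\<^bsub>M\<^esub> \<otimes>\<^bsub>G\<^esub> (\<one>\<^bsub>M\<^esub> \<otimes>\<^bsub>M\<^esub> \<one>\<^bsub>G\<^esub>)"
    using dist c by blast
  moreover have "\<one>\<^bsub>M\<^esub> \<otimes>\<^bsub>M\<^esub> \<one>\<^bsub>G\<^esub> = \<one>\<^bsub>G\<^esub>" using c by simp
  ultimately have "\<one>\<^bsub>G\<^esub> = inv\<^bsub>G\<^esub> \<one>\<^bsub>M\<^esub>" using c by simp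
  then show ?thesis using c by (metis G.inv_inv G.inv_one)
qed

abbreviation "Z \<equiv> brace_centre G M"

lemma Z_facts:
  assumes "z \<in> Z"
  shows "z \<in> carrier G" "G.cent z" "M.cent z"
    "\<And>b. b \<in> carrier G \<Longrightarrow> z \<otimes>\<^bsub>M\<^esub> b = z \<otimes>\<^bsub>G\<^esub> b"
    "\<And>b. b \<in> carrier G \<Longrightarrow> b \<otimes>\<^bsub>M\<^esub> z = b \<otimes>\<^bsub>G\<^esub> z"
proof -
  have zc: "z \<in> carrier G" and P: "\<And>b. b \<in> carrier G \<Longrightarrow> z \<otimes>\<^bsub>G\<^esub> b = b \<otimes>\<^bsub>G\<^esub> z \<and> b \<otimes>\<^bsub>G\<^esub> z = z \<otimes>\<^bsub>M\<^esub> b \<and> z \<otimes>\<^bsub>M\<^esub> b = b \<otimes>\<^bsub>M\<^esub> z"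
    using assms unfolding brace_centre_def by blast+
  show "z \<in> carrier G" by (rule zc)
  show "G.cent z" unfolding G.cent_def using zc P by blast
  show "M.cent z" unfolding M.cent_def car using zc P by blast
  fix b assume b: "b \<in> carrier G"
  show "z \<otimes>\<^bsub>M\<^esub> b = z \<otimes>\<^bsub>G\<^esub> b" using P[OF b] by metis
  show "b \<otimes>\<^bsub>M\<^esub> z = b \<otimes>\<^bsub>G\<^esub> z" using P[OF b] by metis
qed

lemma Z_one: "\<one>\<^bsub>G\<^esub> \<in> Z"
proof -
  have "\<And>b. b \<in> carrier G \<Longrightarrow> \<one>\<^bsub>G\<^esub> \<otimes>\<^bsub>M\<^esub> b = b \<and> b \<otimes>\<^bsub>M\<^esub> \<one>\<^bsub>G\<^esub> = b"
  proof -
    fix b assume "b \<in> carrier G"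
    then have "b \<in> carrier M" using car by simp
    then show "\<one>\<^bsub>G\<^esub> \<otimes>\<^bsub>M\<^esub> b = b \<and> b \<otimes>\<^bsub>M\<^esub> \<one>\<^bsub>G\<^esub> = b"
      using M.l_one[of b] M.r_one[of b] one_eq by simp
  qed
  then show ?thesis unfolding brace_centre_def by simp
qed

lemma Z_mult: assumes "z \<in> Z" "w \<in> Z" shows "z \<otimes>\<^bsub>G\<^esub> w \<in> Z"
proof -
  note zf = Z_facts[OF assms(1)] and wf = Z_facts[OF assms(2)]
  have zw: "z \<otimes>\<^bsub>G\<^esub> w = z \<otimes>\<^bsub>M\<^esub> w" using zf wf by simp
  have gc: "G.cent (z \<otimes>\<^bsub>G\<^esub> w)" using G.cent_mult zf wf by simp
  have mc: "M.cent (z \<otimes>\<^bsub>G\<^esub> w)" using M.cent_mult[OF zf(3) wf(3)] zw by simp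
  show ?thesis unfolding brace_centre_def
  proof (safe)
    show "z \<otimes>\<^bsub>G\<^esub> w \<in> carrier G" using zf wf by simp
  next
    fix b assume b: "b \<in> carrier G"
    show "z \<otimes>\<^bsub>G\<^esub> w \<otimes>\<^bsub>G\<^esub> b = b \<otimes>\<^bsub>G\<^esub> (z \<otimes>\<^bsub>G\<^esub> w)" by (rule G.centD[OF gc b])
    show "z \<otimes>\<^bsub>G\<^esub> w \<otimes>\<^bsub>M\<^esub> b = b \<otimes>\<^bsub>M\<^esub> (z \<otimes>\<^bsub>G\<^esub> w)" using M.centD[OF mc, of b] b car by simp
    have "z \<otimes>\<^bsub>G\<^esub> w \<otimes>\<^bsub>M\<^esub> b = z \<otimes>\<^bsub>M\<^esub> (w \<otimes>\<^bsub>M\<^esub> b)" using zw zf(1) wf(1) b car by (metis M.m_assoc)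
    also have "\<dots> = z \<otimes>\<^bsub>G\<^esub> (w \<otimes>\<^bsub>G\<^esub> b)" using zf wf b car by simp
    also have "\<dots> = z \<otimes>\<^bsub>G\<^esub> w \<otimes>\<^bsub>G\<^esub> b" using zf(1) wf(1) b by (simp add: G.m_assoc)
    also have "\<dots> = b \<otimes>\<^bsub>G\<^esub> (z \<otimes>\<^bsub>G\<^esub> w)" by (rule G.centD[OF gc b])
    finally show "b \<otimes>\<^bsub>G\<^esub> (z \<otimes>\<^bsub>G\<^esub> w) = z \<otimes>\<^bsub>G\<^esub> w \<otimes>\<^bsub>M\<^esub> b" by (rule sym)
  qed
qed

lemma Z_inv_eq: assumes "z \<in> Z" shows "inv\<^bsub>M\<^esub> z = inv\<^bsub>G\<^esub> z"
proof -
  note zf = Z_facts[OF assms]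
  have "z \<otimes>\<^bsub>M\<^esub> inv\<^bsub>G\<^esub> z = \<one>\<^bsub>M\<^esub>" using zf(4)[of "inv\<^bsub>G\<^esub> z"] G.r_inv[OF zf(1)] G.inv_closed[OF zf(1)] one_eq by simp
  then show ?thesis using zf car by (metis G.inv_closed M.inv_equality M.inv_inv M.inv_closed)
qed

lemma Z_inv: assumes "z \<in> Z" shows "inv\<^bsub>G\<^esub> z \<in> Z"
proof -
  note zf = Z_facts[OF assms]
  have gc: "G.cent (inv\<^bsub>G\<^esub> z)" using G.cent_inv zf by simp
  have mc: "M.cent (inv\<^bsub>G\<^esub> z)" using M.cent_inv[OF zf(3)] Z_inv_eq[OF assms] by simp
  show ?thesis unfolding brace_centre_def
  proof (safe)
    show "inv\<^bsub>G\<^esub> z \<in> carrier G" using zf by simp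
  next
    fix b assume b: "b \<in> carrier G"
    show "inv\<^bsub>G\<^esub> z \<otimes>\<^bsub>G\<^esub> b = b \<otimes>\<^bsub>G\<^esub> inv\<^bsub>G\<^esub> z" by (rule G.centD[OF gc b])
    show "inv\<^bsub>G\<^esub> z \<otimes>\<^bsub>M\<^esub> b = b \<otimes>\<^bsub>M\<^esub> inv\<^bsub>G\<^esub> z" using M.centD[OF mc, of b] b car by simp
    have "z \<otimes>\<^bsub>M\<^esub> (inv\<^bsub>G\<^esub> z \<otimes>\<^bsub>M\<^esub> b) = b" using Z_inv_eq[OF assms] zf b car
      by (metis M.canc1)
    then have "z \<otimes>\<^bsub>G\<^esub> (inv\<^bsub>G\<^esub> z \<otimes>\<^bsub>M\<^esub> b) = b" using zf b car by (metis G.inv_closed M.m_closed)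
    then have "inv\<^bsub>G\<^esub> z \<otimes>\<^bsub>M\<^esub> b = inv\<^bsub>G\<^esub> z \<otimes>\<^bsub>G\<^esub> b" using zf b car
      by (metis G.canc2 G.inv_closed M.m_closed)
    then show "b \<otimes>\<^bsub>G\<^esub> inv\<^bsub>G\<^esub> z = inv\<^bsub>G\<^esub> z \<otimes>\<^bsub>M\<^esub> b" using G.centD[OF gc b] by simp
  qed
qed

lemma main:
  assumes max: "maximal_subbrace G M S" and z0: "z0 \<in> Z" "z0 \<notin> S"
  shows "derived_ideal G M \<subseteq> S"
proof -
  have SG: "subgroup S G" and SM: "subgroup S M" and mx: "\<And>T. subbrace G M T \<Longrightarrow> T \<noteq> carrier G \<Longrightarrow> S \<subseteq> T \<Longrightarrow> T = S"
    using max unfolding maximal_subbrace_def subbrace_def by auto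
  note Sc = subgroup.mem_carrier[OF SG]
  have SGm: "\<And>a b. a \<in> S \<Longrightarrow> b \<in> S \<Longrightarrow> a \<otimes>\<^bsub>G\<^esub> b \<in> S" by (rule subgroup.m_closed[OF SG])
  have SGi: "\<And>a. a \<in> S \<Longrightarrow> inv\<^bsub>G\<^esub> a \<in> S" by (rule subgroup.m_inv_closed[OF SG])
  have SMm: "\<And>a b. a \<in> S \<Longrightarrow> b \<in> S \<Longrightarrow> a \<otimes>\<^bsub>M\<^esub> b \<in> S" by (rule subgroup.m_closed[OF SM])
  have SMi: "\<And>a. a \<in> S \<Longrightarrow> inv\<^bsub>M\<^esub> a \<in> S" by (rule subgroup.m_inv_closed[OF SM])
  have S1: "\<one>\<^bsub>G\<^esub> \<in> S" by (rule subgroup.one_closed[OF SG])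
  note Zc = Z_facts(1)
  have eqGM: "\<And>s z. s \<in> carrier G \<Longrightarrow> z \<in> Z \<Longrightarrow> s \<otimes>\<^bsub>M\<^esub> z = s \<otimes>\<^bsub>G\<^esub> z" by (rule Z_facts(5))
  define T where "T = {x. \<exists>s\<in>S. \<exists>z\<in>Z. x = s \<otimes>\<^bsub>G\<^esub> z}"
  have Tc: "T \<subseteq> carrier G" unfolding T_def using Sc Zc by auto
  have T1: "\<one>\<^bsub>G\<^esub> \<in> T" unfolding T_def using S1 Z_one by force
  have TG: "subgroup T G"
  proof (rule G.subgroupI)
    show "T \<subseteq> carrier G" by (rule Tc)
    show "T \<noteq> {}" using T1 by blast
  next
    fix a assume "a \<in> T"
    then obtain s z where sz: "s \<in> S" "z \<in> Z" "a = s \<otimes>\<^bsub>G\<^esub> z" unfolding T_def by blast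
    have "inv\<^bsub>G\<^esub> a = inv\<^bsub>G\<^esub> z \<otimes>\<^bsub>G\<^esub> inv\<^bsub>G\<^esub> s" using sz Sc Zc G.inv_mult_group by simp
    also have "\<dots> = inv\<^bsub>G\<^esub> s \<otimes>\<^bsub>G\<^esub> inv\<^bsub>G\<^esub> z" using G.centD[OF Z_facts(2)[OF Z_inv[OF sz(2)]], of "inv\<^bsub>G\<^esub> s"] Sc sz by simp
    finally show "inv\<^bsub>G\<^esub> a \<in> T" unfolding T_def using SGi Z_inv sz by blast
  next
    fix a b assume "a \<in> T" "b \<in> T"
    then obtain s z s' z' where sz: "s \<in> S" "z \<in> Z" "a = s \<otimes>\<^bsub>G\<^esub> z" "s' \<in> S" "z' \<in> Z" "b = s' \<otimes>\<^bsub>G\<^esub> z'" unfolding T_def by blast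
    have "a \<otimes>\<^bsub>G\<^esub> b = (s \<otimes>\<^bsub>G\<^esub> s') \<otimes>\<^bsub>G\<^esub> (z \<otimes>\<^bsub>G\<^esub> z')"
      using sz Sc G.L1 Z_facts(2) by simp
    then show "a \<otimes>\<^bsub>G\<^esub> b \<in> T" unfolding T_def using SGm Z_mult sz by blast
  qed
  have TM: "subgroup T M"
  proof (rule M.subgroupI)
    show "T \<subseteq> carrier M" using Tc car by simp
    show "T \<noteq> {}" using T1 by blast
  next
    fix a assume "a \<in> T"
    then obtain s z where sz: "s \<in> S" "z \<in> Z" "a = s \<otimes>\<^bsub>G\<^esub> z" unfolding T_def by blast
    have c: "s \<in> carrier M" "z \<in> carrier M" using sz Sc Zc car by auto
    have "inv\<^bsub>M\<^esub> a = inv\<^bsub>M\<^esub> (s \<otimes>\<^bsub>M\<^esub> z)" using sz eqGM Sc by simp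
    also have "\<dots> = inv\<^bsub>M\<^esub> z \<otimes>\<^bsub>M\<^esub> inv\<^bsub>M\<^esub> s" using c M.inv_mult_group by simp
    also have "\<dots> = inv\<^bsub>M\<^esub> s \<otimes>\<^bsub>M\<^esub> inv\<^bsub>M\<^esub> z" using M.centD[OF M.cent_inv[OF Z_facts(3)[OF sz(2)]], of "inv\<^bsub>M\<^esub> s"] c by simp
    also have "\<dots> = inv\<^bsub>M\<^esub> s \<otimes>\<^bsub>G\<^esub> inv\<^bsub>G\<^esub> z" using Z_inv_eq[OF sz(2)] eqGM[OF _ Z_inv[OF sz(2)]] M.inv_closed[OF c(1)] c car by simp
    finally show "inv\<^bsub>M\<^esub> a \<in> T" unfolding T_def using SMi Z_inv sz by blast
  next
    fix a b assume "a \<in> T" "b \<in> T"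
    then obtain s z s' z' where sz: "s \<in> S" "z \<in> Z" "a = s \<otimes>\<^bsub>G\<^esub> z" "s' \<in> S" "z' \<in> Z" "b = s' \<otimes>\<^bsub>G\<^esub> z'" unfolding T_def by blast
    have c: "s \<in> carrier M" "z \<in> carrier M" "s' \<in> carrier M" "z' \<in> carrier M" using sz Sc Zc car by auto
    have "a \<otimes>\<^bsub>M\<^esub> b = (s \<otimes>\<^bsub>M\<^esub> z) \<otimes>\<^bsub>M\<^esub> (s' \<otimes>\<^bsub>M\<^esub> z')" using sz eqGM Sc by simp
    also have "\<dots> = (s \<otimes>\<^bsub>M\<^esub> s') \<otimes>\<^bsub>M\<^esub> (z \<otimes>\<^bsub>M\<^esub> z')" using c M.L1 Z_facts(3) sz by simp
    also have "\<dots> = (s \<otimes>\<^bsub>M\<^esub> s') \<otimes>\<^bsub>G\<^esub> (z \<otimes>\<^bsub>G\<^esub> z')"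
      using eqGM[OF _ sz(5)] eqGM[OF _ Z_mult[OF sz(2,5)]] c car by (metis M.m_closed)
    finally show "a \<otimes>\<^bsub>M\<^esub> b \<in> T" unfolding T_def using SMm Z_mult sz by blast
  qed
  have ST: "S \<subseteq> T" unfolding T_def using Sc Z_one by force
  have z0T: "z0 \<in> T" unfolding T_def using S1 z0 Zc by force
  have Tfull: "T = carrier G"
  proof (rule ccontr)
    assume "T \<noteq> carrier G"
    then have "T = S" using mx[of T] TG TM ST unfolding subbrace_def by blast
    then show False using z0T z0 by blast
  qed
  have dec: "\<And>b. b \<in> carrier G \<Longrightarrow> \<exists>s\<in>S. \<exists>z\<in>Z. b = s \<otimes>\<^bsub>G\<^esub> z"
    using Tfull unfolding T_def by blast
  have nG: "S \<lhd> G" unfolding G.normal_inv_iff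
  proof (intro conjI ballI)
    show "subgroup S G" by (rule SG)
    fix x h assume x: "x \<in> carrier G" and h: "h \<in> S"
    obtain s z where sz: "s \<in> S" "z \<in> Z" "x = s \<otimes>\<^bsub>G\<^esub> z" using dec[OF x] by blast
    have "x \<otimes>\<^bsub>G\<^esub> h \<otimes>\<^bsub>G\<^esub> inv\<^bsub>G\<^esub> x = s \<otimes>\<^bsub>G\<^esub> h \<otimes>\<^bsub>G\<^esub> inv\<^bsub>G\<^esub> s"
      using G.L4 sz Sc h Z_facts(2) by simp
    then show "x \<otimes>\<^bsub>G\<^esub> h \<otimes>\<^bsub>G\<^esub> inv\<^bsub>G\<^esub> x \<in> S" using SGm SGi sz h by simp
  qed
  have nM: "S \<lhd> M" unfolding M.normal_inv_iff
  proof (intro conjI ballI)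
    show "subgroup S M" by (rule SM)
    fix x h assume x: "x \<in> carrier M" and h: "h \<in> S"
    obtain s z where sz: "s \<in> S" "z \<in> Z" "x = s \<otimes>\<^bsub>G\<^esub> z" using dec x car by blast
    have xm: "x = s \<otimes>\<^bsub>M\<^esub> z" using sz eqGM Sc by simp
    have c: "s \<in> carrier M" "h \<in> carrier M" using sz h Sc car by auto
    have "x \<otimes>\<^bsub>M\<^esub> h \<otimes>\<^bsub>M\<^esub> inv\<^bsub>M\<^esub> x = s \<otimes>\<^bsub>M\<^esub> h \<otimes>\<^bsub>M\<^esub> inv\<^bsub>M\<^esub> s"
      using M.L4 c xm Z_facts(3) sz by simp
    then show "x \<otimes>\<^bsub>M\<^esub> h \<otimes>\<^bsub>M\<^esub> inv\<^bsub>M\<^esub> x \<in> S" using SMm SMi sz h by simp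
  qed
  have lam: "\<forall>b\<in>carrier G. brace_lambda G M b ` S \<subseteq> S"
  proof (intro ballI subsetI)
    fix b y assume b: "b \<in> carrier G" and y: "y \<in> brace_lambda G M b ` S"
    then obtain h where h: "h \<in> S" "y = brace_lambda G M b h" by blast
    obtain s z where sz: "s \<in> S" "z \<in> Z" "b = s \<otimes>\<^bsub>G\<^esub> z" using dec[OF b] by blast
    have c: "s \<in> carrier M" "h \<in> carrier M" "z \<in> carrier M" using sz h Sc Zc car by auto
    have zc: "z \<otimes>\<^bsub>M\<^esub> h = h \<otimes>\<^bsub>M\<^esub> z" using M.centD[OF Z_facts(3)[OF sz(2)], of h] c by simp
    have "b \<otimes>\<^bsub>M\<^esub> h = s \<otimes>\<^bsub>M\<^esub> z \<otimes>\<^bsub>M\<^esub> h" using sz eqGM Sc by simp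
    also have "\<dots> = s \<otimes>\<^bsub>M\<^esub> (h \<otimes>\<^bsub>M\<^esub> z)" using c zc by (simp add: M.m_assoc)
    also have "\<dots> = (s \<otimes>\<^bsub>M\<^esub> h) \<otimes>\<^bsub>M\<^esub> z" using c by (simp add: M.m_assoc)
    also have "\<dots> = (s \<otimes>\<^bsub>M\<^esub> h) \<otimes>\<^bsub>G\<^esub> z" using eqGM[OF _ sz(2)] M.m_closed[OF c(1) c(2)] car by simp
    finally have "y = inv\<^bsub>G\<^esub> (s \<otimes>\<^bsub>G\<^esub> z) \<otimes>\<^bsub>G\<^esub> ((s \<otimes>\<^bsub>M\<^esub> h) \<otimes>\<^bsub>G\<^esub> z)"
      using h sz unfolding brace_lambda_def by simp
    also have "\<dots> = inv\<^bsub>G\<^esub> s \<otimes>\<^bsub>G\<^esub> (s \<otimes>\<^bsub>M\<^esub> h)"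
      using G.L2 c car Z_facts(2)[OF sz(2)] by (metis M.m_closed)
    finally show "y \<in> S" using SGm SGi SMm sz h by simp
  qed
  have ideal: "brace_ideal G M S" unfolding brace_ideal_def using nG nM lam by blast
  have gens: "derived_gens G M \<subseteq> S"
  proof
    fix x assume "x \<in> derived_gens G M"
    then obtain a b where ab: "a \<in> carrier G" "b \<in> carrier G" and
      x: "x = inv\<^bsub>G\<^esub> a \<otimes>\<^bsub>G\<^esub> inv\<^bsub>G\<^esub> b \<otimes>\<^bsub>G\<^esub> a \<otimes>\<^bsub>G\<^esub> b
         \<or> x = inv\<^bsub>M\<^esub> a \<otimes>\<^bsub>M\<^esub> inv\<^bsub>M\<^esub> b \<otimes>\<^bsub>M\<^esub> a \<otimes>\<^bsub>M\<^esub> b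
         \<or> x = (a \<otimes>\<^bsub>M\<^esub> b) \<otimes>\<^bsub>G\<^esub> inv\<^bsub>G\<^esub> (a \<otimes>\<^bsub>G\<^esub> b)"
      unfolding derived_gens_def by blast
    obtain s z where sz: "s \<in> S" "z \<in> Z" "a = s \<otimes>\<^bsub>G\<^esub> z" using dec[OF ab(1)] by blast
    obtain s' z' where sz': "s' \<in> S" "z' \<in> Z" "b = s' \<otimes>\<^bsub>G\<^esub> z'" using dec[OF ab(2)] by blast
    have c: "s \<in> carrier G" "z \<in> carrier G" "s' \<in> carrier G" "z' \<in> carrier G" using sz sz' Sc Zc by auto
    have cM: "s \<in> carrier M" "z \<in> carrier M" "s' \<in> carrier M" "z' \<in> carrier M" using c car by auto
    have aM: "a = s \<otimes>\<^bsub>M\<^esub> z" and bM: "b = s' \<otimes>\<^bsub>M\<^esub> z'" using sz sz' eqGM c by auto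
    have g1: "inv\<^bsub>G\<^esub> a \<otimes>\<^bsub>G\<^esub> inv\<^bsub>G\<^esub> b \<otimes>\<^bsub>G\<^esub> a \<otimes>\<^bsub>G\<^esub> b = inv\<^bsub>G\<^esub> s \<otimes>\<^bsub>G\<^esub> inv\<^bsub>G\<^esub> s' \<otimes>\<^bsub>G\<^esub> s \<otimes>\<^bsub>G\<^esub> s'"
      using G.L5[OF c(1) c(3) Z_facts(2)[OF sz(2)] Z_facts(2)[OF sz'(2)]] sz sz' by simp
    have g2: "inv\<^bsub>M\<^esub> a \<otimes>\<^bsub>M\<^esub> inv\<^bsub>M\<^esub> b \<otimes>\<^bsub>M\<^esub> a \<otimes>\<^bsub>M\<^esub> b = inv\<^bsub>M\<^esub> s \<otimes>\<^bsub>M\<^esub> inv\<^bsub>M\<^esub> s' \<otimes>\<^bsub>M\<^esub> s \<otimes>\<^bsub>M\<^esub> s'"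
      using M.L5[OF cM(1) cM(3) Z_facts(3)[OF sz(2)] Z_facts(3)[OF sz'(2)]] aM bM by simp
    have "a \<otimes>\<^bsub>M\<^esub> b = (s \<otimes>\<^bsub>M\<^esub> s') \<otimes>\<^bsub>M\<^esub> (z \<otimes>\<^bsub>M\<^esub> z')"
      using M.L1[OF cM(1) cM(3) Z_facts(3)[OF sz(2)] Z_facts(3)[OF sz'(2)]] aM bM by simp
    also have "\<dots> = (s \<otimes>\<^bsub>M\<^esub> s') \<otimes>\<^bsub>G\<^esub> (z \<otimes>\<^bsub>G\<^esub> z')"
      using eqGM[OF _ sz'(2)] eqGM[OF _ Z_mult[OF sz(2) sz'(2)]] cM car by (metis M.m_closed)
    finally have abM: "a \<otimes>\<^bsub>M\<^esub> b = (s \<otimes>\<^bsub>M\<^esub> s') \<otimes>\<^bsub>G\<^esub> (z \<otimes>\<^bsub>G\<^esub> z')" .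
    have abG: "a \<otimes>\<^bsub>G\<^esub> b = (s \<otimes>\<^bsub>G\<^esub> s') \<otimes>\<^bsub>G\<^esub> (z \<otimes>\<^bsub>G\<^esub> z')"
      using G.L1[OF c(1) c(3) Z_facts(2)[OF sz(2)] Z_facts(2)[OF sz'(2)]] sz sz' by simp
    have g3: "(a \<otimes>\<^bsub>M\<^esub> b) \<otimes>\<^bsub>G\<^esub> inv\<^bsub>G\<^esub> (a \<otimes>\<^bsub>G\<^esub> b) = (s \<otimes>\<^bsub>M\<^esub> s') \<otimes>\<^bsub>G\<^esub> inv\<^bsub>G\<^esub> (s \<otimes>\<^bsub>G\<^esub> s')"
      unfolding abM abG using G.L3 c cM car by (metis G.m_closed M.m_closed)
    have m1: "inv\<^bsub>G\<^esub> s \<otimes>\<^bsub>G\<^esub> inv\<^bsub>G\<^esub> s' \<otimes>\<^bsub>G\<^esub> s \<otimes>\<^bsub>G\<^esub> s' \<in> S" using SGm SGi sz sz' by simp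
    have m2: "inv\<^bsub>M\<^esub> s \<otimes>\<^bsub>M\<^esub> inv\<^bsub>M\<^esub> s' \<otimes>\<^bsub>M\<^esub> s \<otimes>\<^bsub>M\<^esub> s' \<in> S" using SMm SMi sz sz' by simp
    have m3: "(s \<otimes>\<^bsub>M\<^esub> s') \<otimes>\<^bsub>G\<^esub> inv\<^bsub>G\<^esub> (s \<otimes>\<^bsub>G\<^esub> s') \<in> S" using SGm SGi SMm sz sz' by simp
    show "x \<in> S" using x g1 g2 g3 m1 m2 m3 by auto
  qed
  show ?thesis unfolding derived_ideal_def using ideal gens by blast
qed

end

theorem corollary4p9:
  fixes G :: "('a, 'b) monoid_scheme" and M :: "('a, 'c) monoid_scheme"
  assumes "skew_brace G M" and "finite (carrier G)"
  shows "(\<forall>S. maximal_subbrace G M S \<longrightarrow>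
            brace_centre G M \<subseteq> S \<or> derived_ideal G M \<subseteq> S)
         \<and> brace_centre G M \<inter> derived_ideal G M \<subseteq> frattini G M"
proof -
  have g: "group G" "group M" "carrier M = carrier G" and
    d: "\<forall>a\<in>carrier G. \<forall>b\<in>carrier G. \<forall>c\<in>carrier G.
        a \<otimes>\<^bsub>M\<^esub> (b \<otimes>\<^bsub>G\<^esub> c)
          = (a \<otimes>\<^bsub>M\<^esub> b) \<otimes>\<^bsub>G\<^esub> inv\<^bsub>G\<^esub> a \<otimes>\<^bsub>G\<^esub> (a \<otimes>\<^bsub>M\<^esub> c)"
    using assms(1) unfolding skew_brace_def by auto
  interpret sb G M
    by (rule sb.intro[OF g(1) g(2)], unfold_locales, rule g(3), use d in blast)
  have p1: "\<forall>S. maximal_subbrace G M S \<longrightarrow>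
            brace_centre G M \<subseteq> S \<or> derived_ideal G M \<subseteq> S"
  proof (intro allI impI)
    fix S assume S: "maximal_subbrace G M S"
    show "brace_centre G M \<subseteq> S \<or> derived_ideal G M \<subseteq> S"
    proof (cases "brace_centre G M \<subseteq> S")
      case False
      then obtain z0 where "z0 \<in> brace_centre G M" "z0 \<notin> S" by blast
      then show ?thesis using main[OF S] by blast
    qed simp
  qed
  have p2: "brace_centre G M \<inter> derived_ideal G M \<subseteq> frattini G M"
  proof (cases "\<exists>S. maximal_subbrace G M S")
    case True
    then show ?thesis unfolding frattini_def using p1 by auto
  next
    case False
    then show ?thesis unfolding frattini_def brace_centre_def by auto
  qed
  show ?thesis using p1 p2 by blast
qed

end
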